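(* Let $\mathcal{C}\subseteq\{0,1\}^*$ be a full prefix-free codebook, i.e., $\mathcal{C}$ is prefix-free and $\sum_{k\in\mathcal{C}}2^{-|k|}=1$. Let $K$ be a random variable with probability mass function $p_K(k)=2^{-|k|}$ for $k\in\mathcal{C}$. Then $K$ is a randomly-stopped bit sequence.
   Context: $\{0,1\}^*:=\bigcup_{n\ge0}\{0,1\}^n$; for $K\in\{0,1\}^*$, $|K|$ is its length, $K_i$ its $i$-th entry, and $K^{j}=(K_1,\dots,K_j)$. A random $K\in\{0,1\}^*$ is a randomly-stopped bit sequence if $\mathbb{P}(K_n=k_n\mid |K|\ge n,\,K^{n-1}=k^{n-1})=1/2$ for all $n\ge1$ and all $k^n\in\{0,1\}^n$ with $\mathbb{P}(|K|\ge n,\,K^{n-1}=k^{n-1})>0$. *)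

theory Defs
  imports "HOL-Probability.Probability"
begin

text \<open>Bit strings are represented as lists of booleans (False = 0, True = 1).
  For a bit string k, |k| = length k, the i-th entry K_i (1-based) is k ! (i - 1),
  and the prefix K^j is take j k.\<close>

definition prefix_free :: "bool list set \<Rightarrow> bool" where
  "prefix_free C \<longleftrightarrow> (\<forall>k\<in>C. \<forall>k'\<in>C. k \<noteq> k' \<longrightarrow> \<not> prefix k k')"

definition randomly_stopped_bit_sequence :: "bool list pmf \<Rightarrow> bool" where
  "randomly_stopped_bit_sequence K \<longleftrightarrow>
    (\<forall>n::nat. \<forall>kn::bool list. n \<ge> 1 \<longrightarrow> length kn = n \<longrightarrow>
      (let B = {k. length k \<ge> n \<and> take (n - 1) k = take (n - 1) kn};
           A = {k. k ! (n - 1) = kn ! (n - 1)}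
       in measure_pmf.prob K B > 0 \<longrightarrow>
          measure_pmf.prob K (A \<inter> B) / measure_pmf.prob K B = 1 / 2))"

end

theory Submission
  imports Defs
begin

lemma kraft_fin:
  fixes F :: "bool list set"
  assumes "finite F" "prefix_free F" "\<forall>k\<in>F. prefix q k \<and> length k \<le> length q + N"
  shows "(\<Sum>k\<in>F. (1/2::real) ^ length k) \<le> (1/2) ^ length q"
  using assms
proof (induction N arbitrary: F q)
  case 0
  then have "F \<subseteq> {q}" by (auto simp: prefix_def)
  then have "F = {} \<or> F = {q}" by blast
  then show ?case by auto
next
  case (Suc N)
  show ?case
  proof (cases "q \<in> F")
    case True
    then have "F = {q}" using Suc.prems unfolding prefix_free_def by auto
    then show ?thesis by simp
  next
    case False
    define F0 where "F0 = {k\<in>F. prefix (q @ [False]) k}"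
    define F1 where "F1 = {k\<in>F. prefix (q @ [True]) k}"
    have split: "F = F0 \<union> F1"
    proof -
      have "k \<in> F0 \<union> F1" if "k \<in> F" for k
      proof -
        from that Suc.prems(3) have "prefix q k" by auto
        moreover have "k \<noteq> q" using that False by auto
        ultimately obtain b r where "k = q @ b # r"
          by (metis prefix_def append_Nil2 neq_Nil_conv)
        then show ?thesis using that unfolding F0_def F1_def by (cases b) auto
      qed
      then show ?thesis unfolding F0_def F1_def by auto
    qed
    have disj: "F0 \<inter> F1 = {}" unfolding F0_def F1_def
      by (auto simp: prefix_def)
    have pf: "prefix_free G" if "G \<subseteq> F" for G
      using Suc.prems(2) that unfolding prefix_free_def by blast
    have s0: "(\<Sum>k\<in>F0. (1/2::real) ^ length k) \<le> (1/2) ^ length (q @ [False])"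
      apply (rule Suc.IH)
      using Suc.prems pf[of F0] unfolding F0_def by (auto dest: prefix_length_le)
    have s1: "(\<Sum>k\<in>F1. (1/2::real) ^ length k) \<le> (1/2) ^ length (q @ [True])"
      apply (rule Suc.IH)
      using Suc.prems pf[of F1] unfolding F1_def by (auto dest: prefix_length_le)
    have "(\<Sum>k\<in>F. (1/2::real) ^ length k) = (\<Sum>k\<in>F0. (1/2::real) ^ length k) + (\<Sum>k\<in>F1. (1/2::real) ^ length k)"
      using split disj Suc.prems(1) by (metis finite_Un sum.union_disjoint)
    also have "\<dots> \<le> (1/2) ^ length q" using s0 s1 by simp
    finally show ?thesis .
  qed
qed


lemma prefix_snoc_char:
  fixes p k :: "bool list"
  assumes "length p = m"
  shows "(m < length k \<and> take m k = p \<and> k ! m = x) \<longleftrightarrow> prefix (p @ [x]) k"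
proof
  assume h: "m < length k \<and> take m k = p \<and> k ! m = x"
  then have "take (Suc m) k = p @ [x]" by (simp add: take_Suc_conv_app_nth)
  then show "prefix (p @ [x]) k" by (metis take_is_prefix)
next
  assume "prefix (p @ [x]) k"
  then obtain r where r: "k = p @ x # r" by (auto simp: prefix_def)
  then show "m < length k \<and> take m k = p \<and> k ! m = x" using assms by auto
qed

theorem proposition1:
  fixes C :: "bool list set" and K :: "bool list pmf"
  assumes "prefix_free C"
    and "((\<lambda>k. (1 / 2 :: real) ^ length k) has_sum 1) C"
    and "\<And>k. k \<in> C \<Longrightarrow> pmf K k = (1 / 2) ^ length k"
  shows "randomly_stopped_bit_sequence K"
proof -
  define w where "w = (\<lambda>k::bool list. (1 / 2 :: real) ^ length k)"
  have wsum: "(w has_sum 1) C" using assms(2) unfolding w_def .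
  have wsm: "w summable_on X" if "X \<subseteq> C" for X
    using wsum that summable_on_subset_banach by (metis has_sum_imp_summable)
  define g where "g q = infsum w {k\<in>C. prefix q k}" for q
  have g_le: "g q \<le> (1/2) ^ length q" for q
    unfolding g_def
  proof (rule infsum_le_finite_sums)
    show "w summable_on {k \<in> C. prefix q k}" by (rule wsm) auto
    fix F assume F: "finite F" "F \<subseteq> {k \<in> C. prefix q k}"
    define N where "N = Max (insert 0 (length ` F))"
    have "\<forall>k\<in>F. prefix q k \<and> length k \<le> length q + N"
    proof
      fix k assume k: "k \<in> F"
      have "length k \<le> N" unfolding N_def using F k by (intro Max_ge) auto
      then show "prefix q k \<and> length k \<le> length q + N" using F k by auto
    qed
    moreover have "prefix_free F" using assms(1) F unfolding prefix_free_def by blast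
    ultimately show "sum w F \<le> (1/2) ^ length q"
      using kraft_fin[OF F(1)] unfolding w_def by blast
  qed
  have g_split: "g q = g (q @ [False]) + g (q @ [True])" if "q \<notin> C" for q
  proof -
    have eq: "{k\<in>C. prefix q k} = {k\<in>C. prefix (q @ [False]) k} \<union> {k\<in>C. prefix (q @ [True]) k}"
    proof (intro equalityI subsetI)
      fix k assume k: "k \<in> {k\<in>C. prefix q k}"
      then have "k \<noteq> q" using that by auto
      with k obtain b r where "k = q @ b # r"
        by (metis (no_types, lifting) mem_Collect_eq prefix_def append_Nil2 neq_Nil_conv)
      then show "k \<in> {k\<in>C. prefix (q @ [False]) k} \<union> {k\<in>C. prefix (q @ [True]) k}"
        using k by (cases b) auto
    qed (auto dest: append_prefixD)
    have disj: "{k\<in>C. prefix (q @ [False]) k} \<inter> {k\<in>C. prefix (q @ [True]) k} = {}"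
      by (auto simp: prefix_def)
    show ?thesis unfolding g_def eq
      by (rule infsum_Un_disjoint[OF wsm wsm disj]) auto
  qed
  have g_full: "g q = (1/2) ^ length q" if "\<forall>c\<in>C. \<not> strict_prefix c q" for q
    using that
  proof (induction q rule: rev_induct)
    case Nil
    have "{k\<in>C. prefix [] k} = C" by auto
    then show ?case unfolding g_def using wsum by (simp add: infsumI)
  next
    case (snoc b q)
    have sp: "strict_prefix q (q @ [b])" by (simp add: strict_prefix_def)
    have "\<forall>c\<in>C. \<not> strict_prefix c q"
      using snoc.prems sp by (meson prefix_order.less_trans)
    then have gq: "g q = (1/2) ^ length q" by (rule snoc.IH)
    have "q \<notin> C" using snoc.prems sp by blast
    then have "g q = g (q @ [False]) + g (q @ [True])" by (rule g_split)
    moreover have "g (q @ [False]) \<le> (1/2) ^ (Suc (length q))" "g (q @ [True]) \<le> (1/2) ^ (Suc (length q))"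
      using g_le[of "q @ [False]"] g_le[of "q @ [True]"] by auto
    ultimately have "g (q @ [False]) = (1/2) ^ (Suc (length q))" "g (q @ [True]) = (1/2) ^ (Suc (length q))"
      using gq by auto
    then show ?case by (cases b) auto
  qed
  have probC: "measure_pmf.prob K C = 1"
  proof -
    have "measure_pmf.prob K C = infsum (pmf K) C"
      by (simp add: measure_pmf_conv_infsetsum infsetsum_infsum pmf_abs_summable)
    also have "\<dots> = infsum w C" using assms(3) unfolding w_def by (intro infsum_cong) auto
    also have "\<dots> = 1" using wsum by (simp add: infsumI)
    finally show ?thesis .
  qed
  have pmf0: "pmf K k = 0" if "k \<notin> C" for k
  proof -
    have "pmf K k = measure_pmf.prob K {k}" by (simp add: measure_pmf_single)
    also have "\<dots> \<le> measure_pmf.prob K (- C)" using that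
      by (intro measure_pmf.finite_measure_mono) auto
    also have "\<dots> = 0" using probC measure_pmf.prob_compl[of C K] by (simp add: Compl_eq_Diff_UNIV)
    finally show ?thesis by (simp add: antisym)
  qed
  have P: "measure_pmf.prob K X = infsum w (X \<inter> C)" for X
  proof -
    have "measure_pmf.prob K X = infsum (pmf K) X"
      by (simp add: measure_pmf_conv_infsetsum infsetsum_infsum pmf_abs_summable)
    also have "\<dots> = infsum (pmf K) (X \<inter> C)"
      using pmf0 by (intro infsum_cong_neutral) auto
    also have "\<dots> = infsum w (X \<inter> C)" using assms(3) unfolding w_def by (intro infsum_cong) auto
    finally show ?thesis .
  qed
  show ?thesis
    unfolding randomly_stopped_bit_sequence_def Let_def
  proof (intro allI impI)
    fix n :: nat and kn :: "bool list"
    assume n: "1 \<le> n" and len: "length kn = n"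
    define p where "p = take (n - 1) kn"
    have lp: "length p = n - 1" using len n unfolding p_def by simp
    define B where "B = {k::bool list. n \<le> length k \<and> take (n - 1) k = take (n - 1) kn}"
    define A where "A = {k::bool list. k ! (n - 1) = kn ! (n - 1)}"
    assume pos: "0 < measure_pmf.prob K {k. n \<le> length k \<and> take (n - 1) k = take (n - 1) kn}"
    have char: "(n \<le> length k \<and> take (n - 1) k = p \<and> k ! (n - 1) = x) \<longleftrightarrow> prefix (p @ [x]) k" for k x
      using prefix_snoc_char[OF lp, of k x] n by auto
    have BC: "B \<inter> C = {k\<in>C. prefix (p @ [False]) k} \<union> {k\<in>C. prefix (p @ [True]) k}"
      unfolding B_def p_def[symmetric] using char by (auto; metis (full_types))
    have ABC: "(A \<inter> B) \<inter> C = {k\<in>C. prefix (p @ [kn ! (n - 1)]) k}"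
      unfolding A_def B_def p_def[symmetric] using char by auto
    have disj: "{k\<in>C. prefix (p @ [False]) k} \<inter> {k\<in>C. prefix (p @ [True]) k} = {}"
      by (auto simp: prefix_def)
    have PB: "measure_pmf.prob K B = g (p @ [False]) + g (p @ [True])"
      unfolding P BC g_def by (rule infsum_Un_disjoint[OF wsm wsm disj]) auto
    have PAB: "measure_pmf.prob K (A \<inter> B) = g (p @ [kn ! (n - 1)])"
      unfolding P ABC g_def ..
    show "measure_pmf.prob K (A \<inter> B) / measure_pmf.prob K B = 1 / 2"
    proof (cases "\<exists>c\<in>C. prefix c p")
      case True
      then obtain c where c: "c \<in> C" "prefix c p" by blast
      have empty: "{k\<in>C. prefix (p @ [x]) k} = {}" for x
      proof (intro equalityI subsetI)
        fix k assume k: "k \<in> {k\<in>C. prefix (p @ [x]) k}"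
        then have pk: "prefix (p @ [x]) k" "k \<in> C" by auto
        then have "prefix p k" by (auto dest: append_prefixD)
        then have "prefix c k" using c(2) by (rule prefix_order.trans[rotated])
        then have "c = k" using assms(1) c k unfolding prefix_free_def using pk(2) by blast
        moreover have "length k > length c"
        proof -
          have "length (p @ [x]) \<le> length k" using pk(1) by (rule prefix_length_le)
          moreover have "length c \<le> length p" using c(2) by (rule prefix_length_le)
          ultimately show ?thesis by simp
        qed
        ultimately show "k \<in> {}" by simp
      qed simp
      have "measure_pmf.prob K B = 0" unfolding PB g_def empty by simp
      with pos show ?thesis unfolding B_def by simp
    next
      case False
      have full: "g (p @ [x]) = (1/2) ^ n" for x
      proof -
        have "\<forall>c\<in>C. \<not> strict_prefix c (p @ [x])"
          using False by (auto simp: strict_prefix_def prefix_snoc)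
        then show ?thesis using g_full lp n by simp
      qed
      show ?thesis unfolding PB PAB full by simp
    qed
  qed
qed

end
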